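(* Let $R$ be a tolerance relation on $\{1,\ldots,n\}$ and $A(R)$ its tolerance algebra. The following are equivalent: (i) $A(R)$ is associative; (ii) $A(R)$ is power associative; (iii) $R$ is an equivalence relation.
   Context: A tolerance relation on a set $X$ is a reflexive and symmetric relation $R\subset X\times X$. For $R$ a tolerance relation on $\{1,\ldots,n\}$, the tolerance algebra $A(R)$ is the complex vector space with basis $\{E_{ij}:(i,j)\in R\}$, with bilinear product determined by $E_{ij}\star E_{kl}=\delta_{jk}E_{il}$ if $(i,l)\in R$ and $E_{ij}\star E_{kl}=0$ otherwise (i.e. matrix product followed by setting entries in positions not in $R$ to zero). An algebra is power associative if the subalgebra generated by any single element is associative. *)

theory Defs
  imports Complex_Main
begin

definition tolerance_rel :: "nat \<Rightarrow> (nat \<times> nat) set \<Rightarrow> bool" where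
  "tolerance_rel n R \<longleftrightarrow> R \<subseteq> {1..n} \<times> {1..n} \<and> refl_on {1..n} R \<and> sym R"

text \<open>Elements of A(R): complex n x n matrices (functions on indices) supported on R.
  The basis element E_ij corresponds to the indicator of (i,j).\<close>
definition tol_alg :: "nat \<Rightarrow> (nat \<times> nat) set \<Rightarrow> (nat \<Rightarrow> nat \<Rightarrow> complex) set" where
  "tol_alg n R = {a. \<forall>i j. (i, j) \<notin> R \<longrightarrow> a i j = 0}"

definition tol_mult :: "nat \<Rightarrow> (nat \<times> nat) set \<Rightarrow> (nat \<Rightarrow> nat \<Rightarrow> complex)
    \<Rightarrow> (nat \<Rightarrow> nat \<Rightarrow> complex) \<Rightarrow> (nat \<Rightarrow> nat \<Rightarrow> complex)" where
  "tol_mult n R a b = (\<lambda>i l. if (i, l) \<in> R then (\<Sum>j\<in>{1..n}. a i j * b j l) else 0)"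

definition tol_associative :: "nat \<Rightarrow> (nat \<times> nat) set \<Rightarrow> bool" where
  "tol_associative n R \<longleftrightarrow> (\<forall>a\<in>tol_alg n R. \<forall>b\<in>tol_alg n R. \<forall>c\<in>tol_alg n R.
      tol_mult n R (tol_mult n R a b) c = tol_mult n R a (tol_mult n R b c))"

inductive_set gen_subalg :: "nat \<Rightarrow> (nat \<times> nat) set \<Rightarrow> (nat \<Rightarrow> nat \<Rightarrow> complex)
    \<Rightarrow> (nat \<Rightarrow> nat \<Rightarrow> complex) set"
  for n R x where
  gen_base: "x \<in> gen_subalg n R x"
| gen_zero: "(\<lambda>i j. 0) \<in> gen_subalg n R x"
| gen_add: "a \<in> gen_subalg n R x \<Longrightarrow> b \<in> gen_subalg n R x \<Longrightarrow> (\<lambda>i j. a i j + b i j) \<in> gen_subalg n R x"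
| gen_smult: "a \<in> gen_subalg n R x \<Longrightarrow> (\<lambda>i j. c * a i j) \<in> gen_subalg n R x"
| gen_mult: "a \<in> gen_subalg n R x \<Longrightarrow> b \<in> gen_subalg n R x \<Longrightarrow> tol_mult n R a b \<in> gen_subalg n R x"

definition tol_power_associative :: "nat \<Rightarrow> (nat \<times> nat) set \<Rightarrow> bool" where
  "tol_power_associative n R \<longleftrightarrow> (\<forall>x\<in>tol_alg n R.
     \<forall>a\<in>gen_subalg n R x. \<forall>b\<in>gen_subalg n R x. \<forall>c\<in>gen_subalg n R x.
      tol_mult n R (tol_mult n R a b) c = tol_mult n R a (tol_mult n R b c))"

end

theory Submission
  imports Defs
begin

lemma gen_in_alg:
  assumes "x \<in> tol_alg n R" "a \<in> gen_subalg n R x"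
  shows "a \<in> tol_alg n R"
  using assms(2)
  by induction (use assms(1) in \<open>auto simp: tol_alg_def tol_mult_def\<close>)

lemma assoc_imp_pa: "tol_associative n R \<Longrightarrow> tol_power_associative n R"
  unfolding tol_associative_def tol_power_associative_def
  using gen_in_alg by blast

definition mm :: "nat \<Rightarrow> (nat \<Rightarrow> nat \<Rightarrow> complex) \<Rightarrow> (nat \<Rightarrow> nat \<Rightarrow> complex) \<Rightarrow> (nat \<Rightarrow> nat \<Rightarrow> complex)" where
  "mm n a b = (\<lambda>i l. \<Sum>j\<in>{1..n}. a i j * b j l)"

lemma mm_assoc: "mm n (mm n a b) c = mm n a (mm n b c)"
  unfolding mm_def
  by (auto simp: sum_distrib_left sum_distrib_right mult.assoc intro!: ext sum.swap)

lemma equiv_imp_assoc: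
  assumes "equiv {1..n} R"
  shows "tol_associative n R"
proof -
  have tr: "trans R" and sy: "sym R" using assms by (auto simp: equiv_def)
  have eq: "tol_mult n R a b = mm n a b" if "a \<in> tol_alg n R" "b \<in> tol_alg n R" for a b
  proof (intro ext)
    fix i l
    show "tol_mult n R a b i l = mm n a b i l"
    proof (cases "(i, l) \<in> R")
      case True then show ?thesis by (simp add: tol_mult_def mm_def)
    next
      case False
      have "a i j * b j l = 0" for j
      proof (cases "(i,j) \<in> R \<and> (j,l) \<in> R")
        case True then have "(i,l) \<in> R" using tr by (meson transD)
        with False show ?thesis by simp
      next
        case False then show ?thesis using that by (auto simp: tol_alg_def)
      qed
      then show ?thesis using False by (simp add: tol_mult_def mm_def del: mult_eq_0_iff)
    qed
  qed
  have cl: "mm n a b \<in> tol_alg n R" if "a \<in> tol_alg n R" "b \<in> tol_alg n R" for a b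
  proof -
    have "tol_mult n R a b \<in> tol_alg n R" by (auto simp: tol_alg_def tol_mult_def)
    then show ?thesis using eq[OF that] by simp
  qed
  show ?thesis unfolding tol_associative_def
    using eq cl mm_assoc by simp
qed

lemma pa_imp_trans:
  assumes tol: "tolerance_rel n R" and pa: "tol_power_associative n R"
  shows "trans R"
proof (rule transI)
  fix i j k assume ij: "(i,j) \<in> R" and jk: "(j,k) \<in> R"
  have sub: "R \<subseteq> {1..n} \<times> {1..n}" and rf: "\<forall>x\<in>{1..n}. (x,x) \<in> R" and sy: "sym R"
    using tol by (auto simp: tolerance_rel_def refl_on_def)
  have ji: "(j,i) \<in> R" and kj: "(k,j) \<in> R" using ij jk sy by (auto dest: symD)
  have ir: "i \<in> {1..n}" "j \<in> {1..n}" "k \<in> {1..n}" using ij jk sub by auto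
  show "(i,k) \<in> R"
  proof (rule ccontr)
    assume nik: "(i,k) \<notin> R"
    have d: "i \<noteq> j" "j \<noteq> k" "i \<noteq> k" using nik ij jk rf ir by auto
    define x :: "nat \<Rightarrow> nat \<Rightarrow> complex" where
      "x = (\<lambda>p q. if (p = i \<and> q = j) \<or> (p = j \<and> q = i) \<or> (p = j \<and> q = k) \<or> (p = k \<and> q = j) then 1 else 0)"
    have xA: "x \<in> tol_alg n R" using ij jk ji kj by (auto simp: tol_alg_def x_def)
    define y where "y = tol_mult n R x x"
    have "(\<Sum>m\<in>{1..n}. x i m * x m i) = (\<Sum>m\<in>{1..n}. if m = j then 1 else 0)"
      by (rule sum.cong) (use d in \<open>auto simp: x_def\<close>)
    then have yii: "y i i = 1" using rf ir by (simp add: y_def tol_mult_def)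
    have "(\<Sum>m\<in>{1..n}. x j m * x m j) = (\<Sum>m\<in>{1..n}. (if m = i then 1 else 0) + (if m = k then 1 else 0))"
      by (rule sum.cong) (use d in \<open>auto simp: x_def\<close>)
    also have "\<dots> = 2" using ir by (simp add: sum.distrib)
    finally have yjj: "y j j = 2" using rf ir by (simp add: y_def tol_mult_def)
    have yik: "y i k = 0" using nik by (simp add: y_def tol_mult_def)
    have "(\<Sum>m\<in>{1..n}. y i m * x m j) = (\<Sum>m\<in>{1..n}. (if m = i then y i i else 0) + (if m = k then y i k else 0))"
      by (rule sum.cong) (use d in \<open>auto simp: x_def\<close>)
    also have "\<dots> = 1" using ir yii yik by (simp add: sum.distrib)
    finally have L: "tol_mult n R y x i j = 1" using ij by (simp add: tol_mult_def)
    have "(\<Sum>m\<in>{1..n}. x i m * y m j) = (\<Sum>m\<in>{1..n}. if m = j then y j j else 0)"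
      by (rule sum.cong) (use d in \<open>auto simp: x_def\<close>)
    also have "\<dots> = 2" using ir yjj by simp
    finally have Rr: "tol_mult n R x y i j = 2" using ij by (simp add: tol_mult_def)
    have "tol_mult n R y x = tol_mult n R x y"
      using pa xA unfolding tol_power_associative_def y_def by (blast intro: gen_base)
    then have "tol_mult n R y x i j = tol_mult n R x y i j" by simp
    with L Rr show False by simp
  qed
qed

theorem proposition3p7:
  assumes "tolerance_rel n R"
  shows "(tol_associative n R \<longleftrightarrow> tol_power_associative n R)
       \<and> (tol_power_associative n R \<longleftrightarrow> equiv {1..n} R)"
proof -
  have e: "tol_power_associative n R \<Longrightarrow> equiv {1..n} R"
    using pa_imp_trans[OF assms] assms by (auto simp: equiv_def tolerance_rel_def)
  show ?thesis using e equiv_imp_assoc assoc_imp_pa by blast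
qed

end
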